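(* There exists a two-way optical interference automaton (2OIA) that recognizes the language $L_{centre}=\{w_1 a w_2 \mid w_1,w_2\in\{a,b\}^*,\ |w_1|=|w_2|\}$ in time linear in the length of the input string.
   Context: A two-way optical interference automaton (2OIA) is a deterministic machine with finite state set $Q$, start state $q_0$, accepting and rejecting states, finite input alphabet $\Sigma$, and tape alphabet $\Gamma=\Sigma\cup\{\text{¢},\$\}$. On input $w=w_1\cdots w_n$ the read-only tape holds ¢$w_1\cdots w_n\$$ in cells $0,1,\dots,n+1$, scanned by a two-way head. For each cell $m$ there is a monochromatic point light source at the point $(m,0)$ of the plane; all sources have the same wavelength $\lambda$ and the same initial amplitude $A_0$, and each source is at any moment either switched off or switched on with initial phase $0$ or $\pi$. A detector is located at a grid point $(j,k)$ with $j,k\in\{0,\tfrac12,1,\tfrac32,\dots,n+1\}$, pointing towards the source array; its field of vision is the cone making angle $\pi/4$ with the vertical line through it, so it sees exactly the sources at $(m,0)$ with $|m-j|\le k$. The resultant wave at the detector is $\sum A_0 r_m^{-1}e^{i(\phi_m+2\pi r_m/\lambda)}$, summed over the switched-on sources it sees, where $r_m$ is the distance from the source to the detector and $\phi_m\in\{0,\pi\}$ the source's phase; the detector outputs $\underline{1}$ if this resultant (equivalently the intensity) is nonzero and $\underline{0}$ otherwise. The transition function $\delta:Q\times\Gamma\times\{\underline0,\underline1\}\to Q\times\{\text{left},\text{right},\text{stay}\}\times\{\text{left},\text{right},\text{up},\text{down},\text{stay}\}\times\{\mathrm{toggle}(0),\mathrm{toggle}(\pi),-\}$ maps (state, scanned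 symbol, detector output) to a new state, a move of the head by one cell, a move of the detector by one grid step (of length $1/2$), and an action on the source of the currently scanned cell: $\mathrm{toggle}(\phi)$ switches it on with phase $\phi$ if it is off and switches it off if it is on; $-$ does nothing. Initially all sources are off, the machine is in $q_0$, the head is on cell $0$, and the detector is at a prescribed initial grid position. For a given source, a maximal sequence of toggles at consecutive time steps is called non-transient if its length is odd; there is a constant $k$ such that the machine crashes if it attempts a non-transient toggle sequence on a single source for the $(k+1)$-th time. The machine accepts when it is in an accepting state with detector output $\underline0$. Its running time is the total number of moves made by the head plus the number of moves made by the detector. A 2OIA recognizes a language $L$ if it accepts every input in $L$ and rejects every input not in $L$. *)

theory Defs
  imports Complex_Main
begin

datatype 'x tsym = LEnd | REnd | Sym 'x

datatype hmove = HLeft | HRight | HStay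
datatype dmove = DLeft | DRight | DUp | DDown | DStay
datatype action = Toggle0 | TogglePi | NoAct
datatype srcst = Off | On0 | OnPi

text \<open>Detector coordinates are stored doubled: a grid point (j,k), with j,k in
  {0,1/2,...,n+1}, is represented by the naturals (2j,2k) in {0..2n+2}.\<close>
record 'x oia =
  oia_states :: "nat set"
  oia_start :: nat
  oia_acc :: "nat set"
  oia_rej :: "nat set"
  oia_delta :: "nat \<Rightarrow> 'x tsym \<Rightarrow> bool \<Rightarrow> nat \<times> hmove \<times> dmove \<times> action"
  oia_alpha_j :: nat
  oia_beta_j :: int
  oia_alpha_k :: nat
  oia_beta_k :: int
  oia_lambda :: real
  oia_amp :: real
  oia_kbound :: nat

definition init_J :: "'x oia \<Rightarrow> nat \<Rightarrow> int" where
  "init_J M n = int (oia_alpha_j M * (n + 1)) + oia_beta_j M"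

definition init_K :: "'x oia \<Rightarrow> nat \<Rightarrow> int" where
  "init_K M n = int (oia_alpha_k M * (n + 1)) + oia_beta_k M"

definition wf_oia :: "'x oia \<Rightarrow> bool" where
  "wf_oia M \<longleftrightarrow>
     finite (oia_states M) \<and> oia_start M \<in> oia_states M \<and>
     oia_acc M \<subseteq> oia_states M \<and> oia_rej M \<subseteq> oia_states M \<and>
     oia_acc M \<inter> oia_rej M = {} \<and>
     (\<forall>q \<in> oia_states M. \<forall>s o'. fst (oia_delta M q s o') \<in> oia_states M) \<and>
     oia_lambda M > 0 \<and> oia_amp M > 0 \<and>
     oia_alpha_j M \<le> 2 \<and> oia_alpha_k M \<le> 2 \<and>
     (\<forall>n. 0 \<le> init_J M n \<and> init_J M n \<le> 2 * int n + 2 \<and>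
          0 \<le> init_K M n \<and> init_K M n \<le> 2 * int n + 2)"

definition tape :: "'x list \<Rightarrow> nat \<Rightarrow> 'x tsym" where
  "tape w i = (if i = 0 then LEnd else if i \<le> length w then Sym (w ! (i - 1)) else REnd)"

definition src_phase :: "srcst \<Rightarrow> real" where
  "src_phase s = (if s = OnPi then pi else 0)"

text \<open>Distance from the source at (m,0) to the detector at (J/2, K/2).\<close>
definition src_dist :: "nat \<Rightarrow> nat \<Rightarrow> nat \<Rightarrow> real" where
  "src_dist m J K = sqrt ((real m - real J / 2)\<^sup>2 + (real K / 2)\<^sup>2)"

text \<open>Sources on the tape that are switched on and within the detector's field of vision
  (|m - j| \<le> k).\<close>
definition seen :: "nat \<Rightarrow> (nat \<Rightarrow> srcst) \<Rightarrow> nat \<Rightarrow> nat \<Rightarrow> nat set" where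
  "seen n s J K = {m. m \<le> n + 1 \<and> s m \<noteq> Off \<and> \<bar>2 * int m - int J\<bar> \<le> int K}"

definition resultant :: "'x oia \<Rightarrow> nat \<Rightarrow> (nat \<Rightarrow> srcst) \<Rightarrow> nat \<Rightarrow> nat \<Rightarrow> complex" where
  "resultant M n s J K =
     (\<Sum>m \<in> seen n s J K.
        complex_of_real (oia_amp M / src_dist m J K) *
        cis (src_phase (s m) + 2 * pi * src_dist m J K / oia_lambda M))"

text \<open>Detector output (True = 1, False = 0). A switched-on source located exactly at the
  detector (distance 0) gives an unbounded, hence nonzero, field.\<close>
definition det_out :: "'x oia \<Rightarrow> nat \<Rightarrow> (nat \<Rightarrow> srcst) \<Rightarrow> nat \<Rightarrow> nat \<Rightarrow> bool" where
  "det_out M n s J K \<longleftrightarrow>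
     (\<exists>m \<in> seen n s J K. src_dist m J K = 0) \<or> resultant M n s J K \<noteq> 0"

record config =
  c_state :: nat
  c_head :: nat
  c_J :: nat
  c_K :: nat
  c_src :: "nat \<Rightarrow> srcst"
  c_cnt :: "nat \<Rightarrow> nat"            \<comment> \<open>number of completed non-transient toggle sequences per source\<close>
  c_run :: "(nat \<times> nat) option"    \<comment> \<open>toggle sequence in progress: (source, length so far)\<close>
  c_time :: nat                    \<comment> \<open>head moves plus detector moves so far\<close>

text \<open>End the current toggle sequence; None = crash (the (k+1)-th non-transient sequence).\<close>
definition close_run :: "nat \<Rightarrow> (nat \<Rightarrow> nat) \<Rightarrow> (nat \<times> nat) option \<Rightarrow> (nat \<Rightarrow> nat) option" where
  "close_run k cnt r = (case r of None \<Rightarrow> Some cnt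
     | Some (m, l) \<Rightarrow> if odd l then (if cnt m + 1 > k then None else Some (cnt(m := cnt m + 1)))
                      else Some cnt)"

definition apply_act :: "action \<Rightarrow> srcst \<Rightarrow> srcst" where
  "apply_act a s = (case a of NoAct \<Rightarrow> s
     | Toggle0 \<Rightarrow> (if s = Off then On0 else Off)
     | TogglePi \<Rightarrow> (if s = Off then OnPi else Off))"

definition move_head :: "nat \<Rightarrow> hmove \<Rightarrow> nat \<Rightarrow> nat option" where
  "move_head n d h = (case d of HStay \<Rightarrow> Some h
     | HLeft \<Rightarrow> (if h = 0 then None else Some (h - 1))
     | HRight \<Rightarrow> (if h < n + 1 then Some (h + 1) else None))"

definition move_det :: "nat \<Rightarrow> dmove \<Rightarrow> nat \<times> nat \<Rightarrow> (nat \<times> nat) option" where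
  "move_det n d p = (case p of (J, K) \<Rightarrow> (case d of DStay \<Rightarrow> Some (J, K)
     | DLeft \<Rightarrow> (if J = 0 then None else Some (J - 1, K))
     | DRight \<Rightarrow> (if J < 2 * n + 2 then Some (J + 1, K) else None)
     | DDown \<Rightarrow> (if K = 0 then None else Some (J, K - 1))
     | DUp \<Rightarrow> (if K < 2 * n + 2 then Some (J, K + 1) else None)))"

definition det_output :: "'x oia \<Rightarrow> 'x list \<Rightarrow> config \<Rightarrow> bool" where
  "det_output M w c = det_out M (length w) (c_src c) (c_J c) (c_K c)"

definition halted :: "'x oia \<Rightarrow> config \<Rightarrow> bool" where
  "halted M c \<longleftrightarrow> c_state c \<in> oia_acc M \<union> oia_rej M"

text \<open>One step; None means the machine crashes.\<close>
definition step :: "'x oia \<Rightarrow> 'x list \<Rightarrow> config \<Rightarrow> config option" where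
  "step M w c =
    (let n = length w; h = c_head c;
         (q', hm, dm, ac) = oia_delta M (c_state c) (tape w h) (det_output M w c);
         s' = (c_src c)(h := apply_act ac (c_src c h));
         rc = (if ac = NoAct then (close_run (oia_kbound M) (c_cnt c) (c_run c), None)
               else (case c_run c of
                       Some (m, l) \<Rightarrow> if m = h then (Some (c_cnt c), Some (h, l + 1))
                                      else (close_run (oia_kbound M) (c_cnt c) (c_run c), Some (h, 1))
                     | None \<Rightarrow> (Some (c_cnt c), Some (h, 1))))
     in case (fst rc, move_head n hm h, move_det n dm (c_J c, c_K c)) of
          (Some cnt', Some h', Some (J', K')) \<Rightarrow>
            Some \<lparr> c_state = q', c_head = h', c_J = J', c_K = K', c_src = s',
                   c_cnt = cnt', c_run = snd rc,
                   c_time = c_time c + (if hm = HStay then 0 else 1) + (if dm = DStay then 0 else 1) \<rparr>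
        | _ \<Rightarrow> None)"

definition init_config :: "'x oia \<Rightarrow> 'x list \<Rightarrow> config" where
  "init_config M w = \<lparr> c_state = oia_start M, c_head = 0,
     c_J = nat (init_J M (length w)), c_K = nat (init_K M (length w)),
     c_src = (\<lambda>_. Off), c_cnt = (\<lambda>_. 0), c_run = None, c_time = 0 \<rparr>"

fun comp :: "'x oia \<Rightarrow> 'x list \<Rightarrow> nat \<Rightarrow> config option" where
  "comp M w 0 = Some (init_config M w)"
| "comp M w (Suc t) = (case comp M w t of None \<Rightarrow> None
     | Some c \<Rightarrow> if halted M c then Some c else step M w c)"

definition halts_in :: "'x oia \<Rightarrow> 'x list \<Rightarrow> config \<Rightarrow> bool" where
  "halts_in M w c \<longleftrightarrow> (\<exists>t. comp M w t = Some c) \<and> halted M c \<and>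
     close_run (oia_kbound M) (c_cnt c) (c_run c) \<noteq> None"

definition accepts :: "'x oia \<Rightarrow> 'x list \<Rightarrow> bool" where
  "accepts M w \<longleftrightarrow> (\<exists>c. halts_in M w c \<and> c_state c \<in> oia_acc M \<and> \<not> det_output M w c)"

definition rejects :: "'x oia \<Rightarrow> 'x list \<Rightarrow> bool" where
  "rejects M w \<longleftrightarrow> (\<exists>c. halts_in M w c \<and> \<not> (c_state c \<in> oia_acc M \<and> \<not> det_output M w c))"

definition recognizes :: "'x oia \<Rightarrow> 'x list set \<Rightarrow> bool" where
  "recognizes M L \<longleftrightarrow> (\<forall>w. (w \<in> L \<longrightarrow> accepts M w) \<and> (w \<notin> L \<longrightarrow> rejects M w))"

definition linear_time :: "'x oia \<Rightarrow> bool" where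
  "linear_time M \<longleftrightarrow> (\<exists>c d::nat. \<forall>w cf. halts_in M w cf \<longrightarrow> c_time cf \<le> c * length w + d)"

datatype ab = A | B

definition L_centre :: "ab list set" where
  "L_centre = {w1 @ [A] @ w2 | w1 w2. length w1 = length w2}"

end

theory Submission
  imports Defs
begin

definition dl :: "nat \<Rightarrow> ab tsym \<Rightarrow> bool \<Rightarrow> nat \<times> hmove \<times> dmove \<times> action" where
  "dl q s o' = (if q = 0 then (if s = REnd then (1, HStay, DStay, Toggle0) else (0, HRight, DRight, NoAct))
     else if q = 1 then (if o' then (if s = Sym A then 3 else 4, HStay, DStay, Toggle0)
                         else if s = LEnd then (4, HStay, DStay, Toggle0) else (2, HLeft, DStay, Toggle0))
     else if q = 2 then (1, HStay, DStay, Toggle0)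
     else (4, HStay, DStay, NoAct))"

definition MM :: "ab oia" where
  "MM = \<lparr> oia_states = {0,1,2,3,4}, oia_start = 0, oia_acc = {3}, oia_rej = {4},
     oia_delta = dl, oia_alpha_j = 0, oia_beta_j = 0, oia_alpha_k = 0, oia_beta_k = 0,
     oia_lambda = 1, oia_amp = 1, oia_kbound = 0 \<rparr>"

definition cfg0 :: "nat \<Rightarrow> config" where
  "cfg0 i = \<lparr> c_state = 0, c_head = i, c_J = i, c_K = 0, c_src = (\<lambda>_. Off),
     c_cnt = (\<lambda>_. 0), c_run = None, c_time = 2 * i \<rparr>"

definition cfg1 :: "nat \<Rightarrow> nat \<Rightarrow> config" where
  "cfg1 n h = \<lparr> c_state = 1, c_head = h, c_J = n + 1, c_K = 0, c_src = (\<lambda>_. Off)(h := On0),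
     c_cnt = (\<lambda>_. 0), c_run = Some (h, 1), c_time = 2 * (n + 1) + (n + 1 - h) \<rparr>"

definition cfg2 :: "nat \<Rightarrow> nat \<Rightarrow> config" where
  "cfg2 n h = \<lparr> c_state = 2, c_head = h, c_J = n + 1, c_K = 0, c_src = (\<lambda>_. Off),
     c_cnt = (\<lambda>_. 0), c_run = Some (Suc h, 2), c_time = 2 * (n + 1) + (n + 1 - h) \<rparr>"

definition cfgF :: "nat \<Rightarrow> nat \<Rightarrow> nat \<Rightarrow> config" where
  "cfgF q n h = \<lparr> c_state = q, c_head = h, c_J = n + 1, c_K = 0, c_src = (\<lambda>_. Off),
     c_cnt = (\<lambda>_. 0), c_run = Some (h, 2), c_time = 2 * (n + 1) + (n + 1 - h) \<rparr>"

lemma seen_off: "seen n (\<lambda>_. Off) J K = {}"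
  by (simp add: seen_def)

lemma det_off: "det_out M n (\<lambda>_. Off) J K = False"
  by (simp add: det_out_def seen_off resultant_def)

lemma seen_one: "h \<le> n + 1 \<Longrightarrow> seen n ((\<lambda>_. Off)(h := On0)) J 0 = (if 2 * h = J then {h} else {})"
  by (auto simp add: seen_def)

lemma det_one: "h \<le> n + 1 \<Longrightarrow> det_out M n ((\<lambda>_. Off)(h := On0)) J 0 = (2 * h = J)"
  by (auto simp add: det_out_def seen_one resultant_def src_dist_def)

lemma wf: "wf_oia MM"
  by (simp add: wf_oia_def MM_def init_J_def init_K_def dl_def)

lemma phase0: "i \<le> length w + 1 \<Longrightarrow> comp MM w i = Some (cfg0 i)"
proof (induction i)
  case 0
  then show ?case by (simp add: init_config_def cfg0_def MM_def init_J_def init_K_def)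
next
  case (Suc i)
  then have "i < length w + 1" by simp
  then have "tape w i \<noteq> REnd" by (simp add: tape_def)
  with Suc show ?case
    by (simp add: cfg0_def halted_def MM_def step_def Let_def dl_def det_output_def det_off
        close_run_def move_head_def move_det_def apply_act_def fun_upd_idem_iff)
qed

lemmas U = halted_def MM_def step_def Let_def dl_def det_output_def det_off det_one
  close_run_def move_head_def move_det_def apply_act_def tape_def action.case

lemma comp_step: "comp M w t = Some c \<Longrightarrow> \<not> halted M c \<Longrightarrow> comp M w (Suc t) = step M w c"
  by simp

lemma s_start: "step MM w (cfg0 (length w + 1)) = Some (cfg1 (length w) (length w + 1))"
  by (simp add: cfg0_def cfg1_def U fun_eq_iff)

lemma s_12: "h \<le> length w + 1 \<Longrightarrow> 2 * h \<noteq> length w + 1 \<Longrightarrow> h > 0 \<Longrightarrow>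
  step MM w (cfg1 (length w) h) = Some (cfg2 (length w) (h - 1))"
  by (simp add: cfg1_def cfg2_def U fun_eq_iff)

lemma s_21: "h < length w + 1 \<Longrightarrow>
  step MM w (cfg2 (length w) h) = Some (cfg1 (length w) h)"
  by (simp add: cfg1_def cfg2_def U fun_eq_iff)

lemma s_mid: "2 * h = length w + 1 \<Longrightarrow>
  step MM w (cfg1 (length w) h) = Some (cfgF (if w ! (h - 1) = A then 3 else 4) (length w) h)"
  by (simp add: cfg1_def cfgF_def U fun_eq_iff)

lemma s_zero: "step MM w (cfg1 (length w) 0) = Some (cfgF 4 (length w) 0)"
  by (simp add: cfg1_def cfgF_def U fun_eq_iff)

lemma start1: "comp MM w (length w + 2) = Some (cfg1 (length w) (length w + 1))"
proof -
  have "comp MM w (Suc (length w + 1)) = step MM w (cfg0 (length w + 1))"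
    by (rule comp_step[OF phase0]) (auto simp: halted_def MM_def cfg0_def)
  then show ?thesis using s_start by simp
qed

lemma descend: "d \<le> length w + 1 \<Longrightarrow> (\<forall>j<d. 2 * (length w + 1 - j) \<noteq> length w + 1) \<Longrightarrow>
  comp MM w (length w + 2 + 2 * d) = Some (cfg1 (length w) (length w + 1 - d))"
proof (induction d)
  case 0
  then show ?case using start1 by simp
next
  case (Suc d)
  let ?n = "length w"
  have IH: "comp MM w (?n + 2 + 2 * d) = Some (cfg1 ?n (?n + 1 - d))"
    using Suc by auto
  have ne: "2 * (?n + 1 - d) \<noteq> ?n + 1" using Suc.prems(2) by auto
  have nh1: "\<not> halted MM (cfg1 ?n (?n + 1 - d))" by (simp add: halted_def MM_def cfg1_def)
  have s1: "step MM w (cfg1 ?n (?n + 1 - d)) = Some (cfg2 ?n (?n + 1 - d - 1))"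
    using s_12[OF _ ne] Suc.prems(1) by simp
  have a: "comp MM w (Suc (?n + 2 + 2 * d)) = Some (cfg2 ?n (?n + 1 - d - 1))"
    using comp_step[OF IH nh1] s1 by simp
  have nh2: "\<not> halted MM (cfg2 ?n (?n + 1 - d - 1))" by (simp add: halted_def MM_def cfg2_def)
  have s2: "step MM w (cfg2 ?n (?n + 1 - d - 1)) = Some (cfg1 ?n (?n + 1 - d - 1))"
    using s_21 Suc.prems(1) by simp
  have b: "comp MM w (Suc (Suc (?n + 2 + 2 * d))) = Some (cfg1 ?n (?n + 1 - d - 1))"
    using comp_step[OF a nh2] s2 by simp
  have "?n + 2 + 2 * Suc d = Suc (Suc (?n + 2 + 2 * d))" "?n + 1 - Suc d = ?n + 1 - d - 1" by auto
  then show ?case using b by simp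
qed

lemma comp_halted: "comp M w t = Some c \<Longrightarrow> halted M c \<Longrightarrow> comp M w (t + k) = Some c"
  by (induction k) auto

lemma halted_unique: "comp M w t = Some c \<Longrightarrow> halted M c \<Longrightarrow> comp M w t' = Some c' \<Longrightarrow> halted M c' \<Longrightarrow> c = c'"
proof (cases "t \<le> t'")
  case True
  assume "comp M w t = Some c" "halted M c" "comp M w t' = Some c'"
  then show ?thesis using comp_halted[of M w t c "t' - t"] True by simp
next
  case False
  assume "comp M w t = Some c" "comp M w t' = Some c'" "halted M c'"
  then show ?thesis using comp_halted[of M w t' c' "t - t'"] False by simp
qed

lemma centre_iff: "w \<in> L_centre \<longleftrightarrow> odd (length w) \<and> w ! ((length w + 1) div 2 - 1) = A"
proof
  assume "w \<in> L_centre"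
  then obtain w1 w2 where "w = w1 @ [A] @ w2" "length w1 = length w2" by (auto simp: L_centre_def)
  then show "odd (length w) \<and> w ! ((length w + 1) div 2 - 1) = A" by (simp add: nth_append)
next
  assume h: "odd (length w) \<and> w ! ((length w + 1) div 2 - 1) = A"
  define m where "m = (length w + 1) div 2 - 1"
  have ml: "m < length w" and len: "length w = 2 * m + 1" using h by (auto simp: m_def elim!: oddE)
  have "w = take m w @ [w ! m] @ drop (Suc m) w" using id_take_nth_drop[OF ml] by simp
  moreover have "length (take m w) = length (drop (Suc m) w)" using len by simp
  ultimately show "w \<in> L_centre" unfolding L_centre_def using h m_def by (metis (mono_tags, lifting) mem_Collect_eq)
qed

lemma final: "\<exists>t q h. comp MM w t = Some (cfgF q (length w) h) \<and> (q = 3 \<or> q = 4) \<and>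
   (w \<in> L_centre \<longleftrightarrow> q = 3)"
proof (cases "odd (length w)")
  case True
  let ?n = "length w"
  define h where "h = (?n + 1) div 2"
  define d where "d = ?n + 1 - h"
  have hh: "2 * h = ?n + 1" using True by (auto simp: h_def elim!: oddE)
  have dd: "?n + 1 - d = h" "d \<le> ?n + 1" using hh by (auto simp: d_def)
  have "\<forall>j<d. 2 * (?n + 1 - j) \<noteq> ?n + 1" using hh by (auto simp: d_def)
  then have c1: "comp MM w (?n + 2 + 2 * d) = Some (cfg1 ?n h)" using descend[of d w] dd by simp
  have "comp MM w (Suc (?n + 2 + 2 * d)) = Some (cfgF (if w ! (h - 1) = A then 3 else 4) ?n h)"
    using comp_step[OF c1] s_mid[OF hh] by (simp add: halted_def cfg1_def MM_def del: comp.simps)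
  moreover have "w \<in> L_centre \<longleftrightarrow> w ! (h - 1) = A" using centre_iff True h_def by simp
  ultimately show ?thesis by (intro exI[of _ "Suc (?n + 2 + 2 * d)"] exI[of _ "if w ! (h - 1) = A then 3 else 4"] exI[of _ h]) auto
next
  case False
  let ?n = "length w"
  have "\<forall>j<?n+1. 2 * (?n + 1 - j) \<noteq> ?n + 1" using False by presburger
  then have c1: "comp MM w (?n + 2 + 2 * (?n + 1)) = Some (cfg1 ?n 0)" using descend[of "?n+1" w] by simp
  have "comp MM w (Suc (?n + 2 + 2 * (?n + 1))) = Some (cfgF 4 ?n 0)"
    using comp_step[OF c1] s_zero by (simp add: halted_def cfg1_def MM_def del: comp.simps)
  moreover have "w \<notin> L_centre" using centre_iff False by simp
  ultimately show ?thesis by (intro exI[of _ "Suc (?n + 2 + 2 * (?n + 1))"] exI[of _ "4::nat"] exI[of _ "0::nat"]) auto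
qed

theorem theorem1:
  shows "\<exists>M :: ab oia. wf_oia M \<and> recognizes M L_centre \<and> linear_time M"
proof (intro exI conjI)
  show "wf_oia MM" by (rule wf)
  have hF: "halted MM (cfgF q n h)" if "q = 3 \<or> q = 4" for q n h
    using that by (auto simp: halted_def MM_def cfgF_def)
  have cF: "close_run (oia_kbound MM) (c_cnt (cfgF q n h)) (c_run (cfgF q n h)) \<noteq> None" for q n h
    by (simp add: close_run_def cfgF_def)
  have oF: "\<not> det_output MM w (cfgF q n h)" for w q n h
    by (simp add: det_output_def cfgF_def det_off)
  have uniq: "halts_in MM w cf \<Longrightarrow> \<exists>q h. cf = cfgF q (length w) h \<and> (q = 3 \<or> q = 4) \<and> (w \<in> L_centre \<longleftrightarrow> q = 3)" for w cf
  proof -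
    assume a: "halts_in MM w cf"
    obtain t q h where f: "comp MM w t = Some (cfgF q (length w) h)" "q = 3 \<or> q = 4" "w \<in> L_centre \<longleftrightarrow> q = 3"
      using final by blast
    from a obtain t' where "comp MM w t' = Some cf" "halted MM cf" by (auto simp: halts_in_def)
    then have "cfgF q (length w) h = cf" using halted_unique[OF f(1) hF[OF f(2)]] by blast
    then show ?thesis using f by blast
  qed
  show "recognizes MM L_centre"
    unfolding recognizes_def
  proof (intro allI conjI impI)
    fix w
    obtain t q h where f: "comp MM w t = Some (cfgF q (length w) h)" "q = 3 \<or> q = 4" "w \<in> L_centre \<longleftrightarrow> q = 3"
      using final by blast
    have hi: "halts_in MM w (cfgF q (length w) h)" using f hF cF by (auto simp: halts_in_def)
    { assume "w \<in> L_centre"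
      then show "accepts MM w" unfolding accepts_def using hi f oF
        by (intro exI[of _ "cfgF q (length w) h"]) (auto simp: MM_def cfgF_def) }
    { assume "w \<notin> L_centre"
      then show "rejects MM w" unfolding rejects_def using hi f
        by (intro exI[of _ "cfgF q (length w) h"]) (auto simp: MM_def cfgF_def) }
  qed
  show "linear_time MM"
    unfolding linear_time_def
  proof (intro exI allI impI)
    fix w cf
    assume "halts_in MM w cf"
    then obtain q h where "cf = cfgF q (length w) h" using uniq by blast
    then show "c_time cf \<le> 3 * length w + 3" by (simp add: cfgF_def)
  qed
qed

end
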